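(* The polynomials $-5\Lambda^9_{1,1,1}M^{10}_1+56\Lambda^7_{1,1}K^{12}_{1,1}$ and $-5(M^{10}_1)^2+64M^8K^{12}_{1,1}$ are divisible by $f_1'$ in the polynomial ring of jet variables; let $X^{18}$ and $X^{19}$ be the respective quotients (they are bi-invariants of weights 18 and 19). Then $X^{18}$ is not a polynomial in the eleven bi-invariants $f_1',\Lambda^3,\Lambda^5_1,\Lambda^7_{1,1},M^8,\Lambda^9_{1,1,1},M^{10}_1,N^{12},K^{12}_{1,1},H^{14}_1,F^{16}_{1,1}$, and $X^{19}$ is not a polynomial in these eleven together with $X^{18}$.
   Context: $f_i^{(\lambda)}$ ($i\in\{1,2\}$, $\lambda\ge1$) are independent indeterminates; $D=\sum_{i,\lambda}f_i^{(\lambda+1)}\partial/\partial f_i^{(\lambda)}$; $\Delta^{\alpha,\beta}:=f_1^{(\alpha)}f_2^{(\beta)}-f_1^{(\beta)}f_2^{(\alpha)}$; for $P,Q$ of weights $m,n$, $[P,Q]:=n\,DP\cdot Q-m\,P\cdot DQ$ (superscripts are weights, $f_1'$ has weight 1). $\Lambda^3:=\Delta^{1,2}$; $\Lambda^5_1:=\Delta^{1,3}f_1'-3\Delta^{1,2}f_1''$; $\Lambda^7_{1,1}:=(\Delta^{1,4}+4\Delta^{2,3})(f_1')^2-10\Delta^{1,3}f_1'f_1''+15\Delta^{1,2}(f_1'')^2$; $M^8:=3\Delta^{1,4}\Delta^{1,2}+12\Delta^{2,3}\Delta^{1,2}-5(\Delta^{1,3})^2$; $\Lambda^9_{1,1,1}:=[\Lambda^7_{1,1},f_1']$;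 $M^{10}_1:=[M^8,f_1']$; $N^{12}:=[M^8,\Lambda^3]$; $K^{12}_{1,1}:=[\Lambda^7_{1,1},\Lambda^5_1]/f_1'$; $H^{14}_1:=[M^8,\Lambda^5_1]$; $F^{16}_{1,1}:=[M^8,\Lambda^7_{1,1}]$. A bi-invariant is a polynomial $P(j^\kappa f)$ with $P(j^\kappa(f\circ\phi))=(\phi')^mP((j^\kappa f)\circ\phi)$ for all holomorphic germs $f:(\mathbb C,0)\to\mathbb C^2$ and local biholomorphisms $\phi$, and invariant under $f_2^{(\lambda)}\mapsto f_2^{(\lambda)}+uf_1^{(\lambda)}$ for all $u\in\mathbb C$. *)

theory Defs
  imports Complex_Main "HOL-Library.Poly_Mapping"
begin

text \<open>Jet variables f_i^(l) are indexed by pairs (i,l); monomials are finitely supported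
  exponent maps, polynomials are finitely supported coefficient maps (complex coefficients).\<close>

type_synonym jmono = "(nat \<times> nat) \<Rightarrow>\<^sub>0 nat"
type_synonym jpoly = "jmono \<Rightarrow>\<^sub>0 complex"

definition monom :: "jmono \<Rightarrow> complex \<Rightarrow> jpoly" where
  "monom m c = Poly_Mapping.single m c"

definition const :: "complex \<Rightarrow> jpoly" where
  "const c = monom 0 c"

definition fv :: "nat \<Rightarrow> nat \<Rightarrow> jpoly" where
  "fv i l = monom (Poly_Mapping.single (i, l) 1) 1"

text \<open>total derivative D = sum f_i^(l+1) d/d f_i^(l) on a monomial, extended linearly\<close>
definition Dmon :: "jmono \<Rightarrow> jpoly" where
  "Dmon m = (\<Sum>v\<in>Poly_Mapping.keys m.
      const (of_nat (Poly_Mapping.lookup m v)) * monom (m - Poly_Mapping.single v 1) 1 * fv (fst v) (snd v + 1))"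

definition D :: "jpoly \<Rightarrow> jpoly" where
  "D p = (\<Sum>m\<in>Poly_Mapping.keys p. const (Poly_Mapping.lookup p m) * Dmon m)"

definition Delta :: "nat \<Rightarrow> nat \<Rightarrow> jpoly" where
  "Delta a b = fv 1 a * fv 2 b - fv 1 b * fv 2 a"

text \<open>bracket [P,Q] = n DP Q - m P DQ for P of weight m and Q of weight n\<close>
definition br :: "nat \<Rightarrow> jpoly \<Rightarrow> nat \<Rightarrow> jpoly \<Rightarrow> jpoly" where
  "br m P n Q = const (of_nat n) * D P * Q - const (of_nat m) * P * D Q"

definition pquot :: "jpoly \<Rightarrow> jpoly \<Rightarrow> jpoly" where
  "pquot p d = (THE q. p = d * q)"

definition f1' :: jpoly where "f1' = fv 1 1"
definition f1'' :: jpoly where "f1'' = fv 1 2"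

definition Lam3 :: jpoly where "Lam3 = Delta 1 2"
definition Lam5 :: jpoly where
  "Lam5 = Delta 1 3 * f1' - const 3 * Delta 1 2 * f1''"
definition Lam7 :: jpoly where
  "Lam7 = (Delta 1 4 + const 4 * Delta 2 3) * f1'^2 - const 10 * Delta 1 3 * f1' * f1''
          + const 15 * Delta 1 2 * f1''^2"
definition M8 :: jpoly where
  "M8 = const 3 * Delta 1 4 * Delta 1 2 + const 12 * Delta 2 3 * Delta 1 2 - const 5 * (Delta 1 3)^2"
definition Lam9 :: jpoly where "Lam9 = br 7 Lam7 1 f1'"
definition M10 :: jpoly where "M10 = br 8 M8 1 f1'"
definition N12 :: jpoly where "N12 = br 8 M8 3 Lam3"
definition K12 :: jpoly where "K12 = pquot (br 7 Lam7 5 Lam5) f1'"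
definition H14 :: jpoly where "H14 = br 8 M8 5 Lam5"
definition F16 :: jpoly where "F16 = br 8 M8 7 Lam7"

inductive_set polys_in :: "jpoly set \<Rightarrow> jpoly set" for G where
  const: "const c \<in> polys_in G"
| gen: "g \<in> G \<Longrightarrow> g \<in> polys_in G"
| add: "p \<in> polys_in G \<Longrightarrow> q \<in> polys_in G \<Longrightarrow> p + q \<in> polys_in G"
| mult: "p \<in> polys_in G \<Longrightarrow> q \<in> polys_in G \<Longrightarrow> p * q \<in> polys_in G"

definition A18 :: jpoly where "A18 = - const 5 * Lam9 * M10 + const 56 * Lam7 * K12"
definition A19 :: jpoly where "A19 = - const 5 * M10^2 + const 64 * M8 * K12"
definition X18 :: jpoly where "X18 = pquot A18 f1'"
definition X19 :: jpoly where "X19 = pquot A19 f1'"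

definition eleven :: "jpoly set" where
  "eleven = {f1', Lam3, Lam5, Lam7, M8, Lam9, M10, N12, K12, H14, F16}"

end

theory Submission imports Defs "HOL-Library.Product_Lexorder" begin

lemma const_0[simp]: "const 0 = 0" by (simp add: const_def monom_def)
lemma const_add: "const (a + b) = const a + const b" by (simp add: const_def monom_def single_add)
lemma const_mult: "const (a * b) = const a * const b" by (simp add: const_def monom_def mult_single)
lemma const_1[simp]: "const 1 = 1" by (simp add: const_def monom_def)
lemma const_numeral[simp]: "const (numeral k) = numeral k" by (simp add: const_def monom_def)
lemma const_of_nat: "const (of_nat k) = of_nat k" by (simp add: const_def monom_def)

lemma monom_0[simp]: "monom m 0 = 0" by (simp add: monom_def)
lemma monom_mult: "monom a c * monom b d = monom (a + b) (c * d)" by (simp add: monom_def mult_single)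
lemma monom_add: "monom a (c + d) = monom a c + monom a d" by (simp add: monom_def single_add)

lemma expand: "p = (\<Sum>m\<in>Poly_Mapping.keys p. monom m (Poly_Mapping.lookup p m))"
proof (rule poly_mapping_eqI)
  fix k
  show "Poly_Mapping.lookup p k = Poly_Mapping.lookup (\<Sum>m\<in>Poly_Mapping.keys p. monom m (Poly_Mapping.lookup p m)) k"
    by (simp add: lookup_sum monom_def lookup_single when_def in_keys_iff)
qed

lemma Dmon_superset:
  assumes "finite S" "Poly_Mapping.keys m \<subseteq> S"
  shows "Dmon m = (\<Sum>v\<in>S. const (of_nat (Poly_Mapping.lookup m v)) * monom (m - Poly_Mapping.single v 1) 1 * fv (fst v) (snd v + 1))"
  unfolding Dmon_def
  by (rule sum.mono_neutral_left) (use assms in \<open>auto simp: in_keys_iff\<close>)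

lemma D_superset:
  assumes "finite S" "Poly_Mapping.keys p \<subseteq> S"
  shows "D p = (\<Sum>m\<in>S. const (Poly_Mapping.lookup p m) * Dmon m)"
  unfolding D_def
  by (rule sum.mono_neutral_left) (use assms in \<open>auto simp: in_keys_iff\<close>)

lemma D_add: "D (p + q) = D p + D q"
proof -
  let ?S = "Poly_Mapping.keys p \<union> Poly_Mapping.keys q"
  have "D (p+q) = (\<Sum>m\<in>?S. const (Poly_Mapping.lookup (p+q) m) * Dmon m)"
    by (rule D_superset) (auto dest: set_mp[OF keys_add])
  also have "\<dots> = (\<Sum>m\<in>?S. const (Poly_Mapping.lookup p m) * Dmon m) + (\<Sum>m\<in>?S. const (Poly_Mapping.lookup q m) * Dmon m)"
    by (simp add: lookup_add const_add distrib_right sum.distrib)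
  also have "\<dots> = D p + D q"
    by (simp add: D_superset[symmetric])
  finally show ?thesis .
qed

lemma D_0[simp]: "D 0 = 0" by (simp add: D_def)

lemma D_sum: "D (sum f A) = (\<Sum>a\<in>A. D (f a))"
  by (induction A rule: infinite_finite_induct) (auto simp: D_add)

lemma D_monom: "D (monom m c) = const c * Dmon m"
proof (cases "c = 0")
  case True then show ?thesis by simp
next
  case False
  have "D (monom m c) = (\<Sum>m'\<in>{m}. const (Poly_Mapping.lookup (monom m c) m') * Dmon m')"
    by (rule D_superset) (auto simp: monom_def)
  then show ?thesis by (simp add: monom_def)
qed

lemma monom_const: "monom n d = const d * monom n 1"
  by (simp add: const_def monom_mult)

lemma shift1:
  assumes "Poly_Mapping.lookup a v \<noteq> 0"
  shows "a + b - Poly_Mapping.single v (1::nat) = (a - Poly_Mapping.single v 1) + b"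
  by (rule poly_mapping_eqI) (use assms in \<open>auto simp: lookup_add lookup_minus lookup_single when_def\<close>)

lemma shift2:
  assumes "Poly_Mapping.lookup b v \<noteq> 0"
  shows "a + b - Poly_Mapping.single v (1::nat) = a + (b - Poly_Mapping.single v 1)"
  by (rule poly_mapping_eqI) (use assms in \<open>auto simp: lookup_add lookup_minus lookup_single when_def\<close>)

lemma Dmon_add: "Dmon (a + b) = Dmon a * monom b 1 + monom a 1 * Dmon b"
proof -
  let ?S = "Poly_Mapping.keys a \<union> Poly_Mapping.keys b"
  let ?t = "\<lambda>m v. const (of_nat (Poly_Mapping.lookup m v)) * monom (m - Poly_Mapping.single v 1) 1 * fv (fst v) (snd v + 1)"
  have fin: "finite ?S" by simp
  have "Dmon (a+b) = (\<Sum>v\<in>?S. ?t (a+b) v)"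
    by (rule Dmon_superset) (auto dest: set_mp[OF keys_add])
  also have "\<dots> = (\<Sum>v\<in>?S. ?t a v * monom b 1 + monom a 1 * ?t b v)"
  proof (rule sum.cong[OF refl])
    fix v
    have e1: "const (of_nat (Poly_Mapping.lookup a v)) * monom (a + b - Poly_Mapping.single v 1) 1
       = const (of_nat (Poly_Mapping.lookup a v)) * monom (a - Poly_Mapping.single v 1) 1 * monom b 1"
      by (cases "Poly_Mapping.lookup a v = 0") (simp, subst shift1, assumption, simp add: monom_mult mult.assoc)
    have e2: "const (of_nat (Poly_Mapping.lookup b v)) * monom (a + b - Poly_Mapping.single v 1) 1
       = monom a 1 * (const (of_nat (Poly_Mapping.lookup b v)) * monom (b - Poly_Mapping.single v 1) 1)"
      by (cases "Poly_Mapping.lookup b v = 0") (simp, subst shift2, assumption, simp add: mult.left_commute[of "monom a 1"] monom_mult)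
    have "?t (a+b) v = (const (of_nat (Poly_Mapping.lookup a v)) * monom (a + b - Poly_Mapping.single v 1) 1
       + const (of_nat (Poly_Mapping.lookup b v)) * monom (a + b - Poly_Mapping.single v 1) 1) * fv (fst v) (snd v + 1)"
      by (simp add: lookup_add const_add distrib_right)
    also have "\<dots> = ?t a v * monom b 1 + monom a 1 * ?t b v"
      unfolding e1 e2 by (simp add: algebra_simps)
    finally show "?t (a+b) v = ?t a v * monom b 1 + monom a 1 * ?t b v" .
  qed
  also have "\<dots> = (\<Sum>v\<in>?S. ?t a v) * monom b 1 + monom a 1 * (\<Sum>v\<in>?S. ?t b v)"
    by (simp add: sum.distrib sum_distrib_left sum_distrib_right)
  also have "\<dots> = Dmon a * monom b 1 + monom a 1 * Dmon b"
  proof -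
    have "Dmon a = (\<Sum>v\<in>?S. ?t a v)" by (rule Dmon_superset) auto
    moreover have "Dmon b = (\<Sum>v\<in>?S. ?t b v)" by (rule Dmon_superset) auto
    ultimately show ?thesis by simp
  qed
  finally show ?thesis .
qed

lemma D_monom_mult: "D (monom m c * monom n d) = D (monom m c) * monom n d + monom m c * D (monom n d)"
  unfolding monom_mult D_monom Dmon_add
  by (subst (2 4) monom_const) (simp add: const_mult algebra_simps)

lemma D_mult: "D (p * q) = D p * q + p * D q"
proof -
  let ?P = "Poly_Mapping.keys p" and ?Q = "Poly_Mapping.keys q"
  let ?mp = "\<lambda>m. monom m (Poly_Mapping.lookup p m)" and ?mq = "\<lambda>n. monom n (Poly_Mapping.lookup q n)"
  have pq: "p * q = (\<Sum>m\<in>?P. \<Sum>n\<in>?Q. ?mp m * ?mq n)"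
    by (subst expand[of p], subst expand[of q]) (simp add: sum_product)
  have "D (p*q) = (\<Sum>m\<in>?P. \<Sum>n\<in>?Q. D (?mp m) * ?mq n + ?mp m * D (?mq n))"
    unfolding pq by (simp add: D_sum D_monom_mult)
  also have "\<dots> = (\<Sum>m\<in>?P. D (?mp m)) * (\<Sum>n\<in>?Q. ?mq n) + (\<Sum>m\<in>?P. ?mp m) * (\<Sum>n\<in>?Q. D (?mq n))"
    by (simp add: sum.distrib sum_product)
  also have "\<dots> = D p * q + p * D q"
    by (simp add: D_sum[symmetric] expand[symmetric])
  finally show ?thesis .
qed

lemma D_const[simp]: "D (const c) = 0"
  by (simp add: const_def D_monom Dmon_def)

lemma D_fv[simp]: "D (fv i l) = fv i (l+1)"
proof -
  have "D (fv i l) = Dmon (Poly_Mapping.single (i, l) 1)"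
    unfolding fv_def D_monom by simp
  also have "\<dots> = fv i (l+1)"
    unfolding Dmon_def by (simp add: monom_def)
  finally show ?thesis .
qed

lemma D_1[simp]: "D 1 = 0" using D_const[of 1] by simp
lemma D_numeral[simp]: "D (numeral k) = 0" using D_const[of "numeral k"] by simp
lemma D_uminus[simp]: "D (- p) = - D p"
  using D_add[of "-p" p] by (simp add: eq_neg_iff_add_eq_0)
lemma D_diff[simp]: "D (p - q) = D p - D q"
  using D_add[of p "-q"] by simp
lemma D_power2: "D (p^2) = 2 * p * D p"
  by (simp add: power2_eq_square D_mult)

lemma D_fv_num: "D (fv i 1) = fv i 2" "D (fv i 2) = fv i 3" "D (fv i 3) = fv i 4"
  "D (fv i 4) = fv i 5" "D (fv i 5) = fv i 6" "D (fv i 6) = fv i 7"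
  by (simp_all add: numeral_eq_Suc)

lemmas Dsimps = of_nat_numeral const_numeral D_mult D_add D_diff D_power2 D_numeral D_uminus D_1 D_fv_num D_const

definition rK :: jpoly where "rK = - 50*((fv 1 3))^3*((fv 2 1))^2 + 65*(fv 1 2)*(fv 1 3)*(fv 1 4)*((fv 2 1))^2 + 110*(fv 1 2)*((fv 1 3))^2*(fv 2 1)*(fv 2 2) - 15*((fv 1 2))^2*(fv 1 5)*((fv 2 1))^2 - 75*((fv 1 2))^2*(fv 1 4)*(fv 2 1)*(fv 2 2) - 110*((fv 1 2))^2*(fv 1 3)*(fv 2 1)*(fv 2 3) + 75*((fv 1 2))^3*(fv 2 1)*(fv 2 4) - 7*(fv 1 1)*((fv 1 4))^2*((fv 2 1))^2 + 5*(fv 1 1)*(fv 1 3)*(fv 1 5)*((fv 2 1))^2 - 31*(fv 1 1)*(fv 1 3)*(fv 1 4)*(fv 2 1)*(fv 2 2) - 112*(fv 1 1)*((fv 1 3))^2*((fv 2 2))^2 + 100*(fv 1 1)*((fv 1 3))^2*(fv 2 1)*(fv 2 3) + 15*(fv 1 1)*(fv 1 2)*(fv 1 5)*(fv 2 1)*(fv 2 2) + 75*(fv 1 1)*(fv 1 2)*(fv 1 4)*((fv 2 2))^2 - 9*(fv 1 1)*(fv 1 2)*(fv 1 4)*(fv 2 1)*(fv 2 3) + 114*(fv 1 1)*(fv 1 2)*(fv 1 3)*(fv 2 2)*(fv 2 3) - 90*(fv 1 1)*(fv 1 2)*(fv 1 3)*(fv 2 1)*(fv 2 4) - 2*(fv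 1 1)*((fv 1 2))^2*((fv 2 3))^2 - 75*(fv 1 1)*((fv 1 2))^2*(fv 2 2)*(fv 2 4) + 15*(fv 1 1)*((fv 1 2))^2*(fv 2 1)*(fv 2 5) - 5*((fv 1 1))^2*(fv 1 5)*(fv 2 1)*(fv 2 3) - 25*((fv 1 1))^2*(fv 1 4)*(fv 2 2)*(fv 2 3) + 14*((fv 1 1))^2*(fv 1 4)*(fv 2 1)*(fv 2 4) - 50*((fv 1 1))^2*(fv 1 3)*((fv 2 3))^2 + 56*((fv 1 1))^2*(fv 1 3)*(fv 2 2)*(fv 2 4) - 5*((fv 1 1))^2*(fv 1 3)*(fv 2 1)*(fv 2 5) + 34*((fv 1 1))^2*(fv 1 2)*(fv 2 3)*(fv 2 4) - 15*((fv 1 1))^2*(fv 1 2)*(fv 2 2)*(fv 2 5) - 7*((fv 1 1))^3*((fv 2 4))^2 + 5*((fv 1 1))^3*(fv 2 3)*(fv 2 5)"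

definition QK :: jpoly where "QK = 5 * M8 * f1''^2 + f1' * rK"

lemma B_id: "br 7 Lam7 5 Lam5 = f1' * QK"
  unfolding br_def QK_def rK_def Lam7_def Lam5_def M8_def Delta_def f1'_def f1''_def
  by (simp only: Dsimps) algebra

lemma f1'_ne: "f1' \<noteq> 0"
proof
  assume "f1' = 0"
  then have "Poly_Mapping.lookup f1' (Poly_Mapping.single (1,1) 1) = 0" by simp
  then show False by (simp add: f1'_def fv_def monom_def)
qed

lemma pquot_eq: assumes "d \<noteq> 0" "p = d * q" shows "pquot p d = q"
  unfolding pquot_def using assms by (auto intro!: the_equality)

lemma K12_eq: "K12 = QK"
  unfolding K12_def by (rule pquot_eq[OF f1'_ne B_id])

lemma Df1': "D f1' = f1''" unfolding f1'_def f1''_def by (rule D_fv_num(1))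

definition X18' :: jpoly where
  "X18' = -5 * D Lam7 * D M8 * f1' + 40 * D Lam7 * M8 * f1'' + 35 * Lam7 * f1'' * D M8 + 56 * Lam7 * rK"
definition X19' :: jpoly where
  "X19' = -5 * (D M8)^2 * f1' + 80 * D M8 * M8 * f1'' + 64 * M8 * rK"

lemma A18_id: "A18 = f1' * X18'"
  unfolding A18_def X18'_def Lam9_def M10_def br_def K12_eq QK_def
  by (simp only: Df1' of_nat_numeral const_numeral of_nat_1 const_1 const_mult[symmetric]) algebra

lemma A19_id: "A19 = f1' * X19'"
  unfolding A19_def X19'_def Lam9_def M10_def br_def K12_eq QK_def
  by (simp only: Df1' of_nat_numeral const_numeral of_nat_1 const_1) algebra

lemma X18_eq: "X18 = X18'" unfolding X18_def by (rule pquot_eq[OF f1'_ne A18_id])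
lemma X19_eq: "X19 = X19'" unfolding X19_def by (rule pquot_eq[OF f1'_ne A19_id])

definition mon :: "((nat \<times> nat) \<Rightarrow> complex) \<Rightarrow> jmono \<Rightarrow> complex" where
  "mon x m = (\<Prod>v\<in>Poly_Mapping.keys m. x v ^ Poly_Mapping.lookup m v)"

definition ev :: "((nat \<times> nat) \<Rightarrow> complex) \<Rightarrow> jpoly \<Rightarrow> complex" where
  "ev x p = (\<Sum>m\<in>Poly_Mapping.keys p. Poly_Mapping.lookup p m * mon x m)"

lemma mon_superset: "finite S \<Longrightarrow> Poly_Mapping.keys m \<subseteq> S \<Longrightarrow> mon x m = (\<Prod>v\<in>S. x v ^ Poly_Mapping.lookup m v)"
  unfolding mon_def by (rule prod.mono_neutral_left) (auto simp: in_keys_iff)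

lemma mon_add: "mon x (a + b) = mon x a * mon x b"
proof -
  let ?S = "Poly_Mapping.keys a \<union> Poly_Mapping.keys b"
  have "mon x (a+b) = (\<Prod>v\<in>?S. x v ^ Poly_Mapping.lookup (a+b) v)"
    by (rule mon_superset) (auto dest: set_mp[OF keys_add])
  also have "\<dots> = (\<Prod>v\<in>?S. x v ^ Poly_Mapping.lookup a v) * (\<Prod>v\<in>?S. x v ^ Poly_Mapping.lookup b v)"
    by (simp add: lookup_add power_add prod.distrib)
  also have "\<dots> = mon x a * mon x b"
    by (simp add: mon_superset[symmetric])
  finally show ?thesis .
qed

lemma ev_superset: "finite S \<Longrightarrow> Poly_Mapping.keys p \<subseteq> S \<Longrightarrow> ev x p = (\<Sum>m\<in>S. Poly_Mapping.lookup p m * mon x m)"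
  unfolding ev_def by (rule sum.mono_neutral_left) (auto simp: in_keys_iff)

lemma ev_add[simp]: "ev x (p + q) = ev x p + ev x q"
proof -
  let ?S = "Poly_Mapping.keys p \<union> Poly_Mapping.keys q"
  have "ev x (p+q) = (\<Sum>m\<in>?S. Poly_Mapping.lookup (p+q) m * mon x m)"
    by (rule ev_superset) (auto dest: set_mp[OF keys_add])
  also have "\<dots> = (\<Sum>m\<in>?S. Poly_Mapping.lookup p m * mon x m) + (\<Sum>m\<in>?S. Poly_Mapping.lookup q m * mon x m)"
    by (simp add: lookup_add distrib_right sum.distrib)
  also have "\<dots> = ev x p + ev x q"
    by (simp add: ev_superset[symmetric])
  finally show ?thesis .
qed

lemma ev_0[simp]: "ev x 0 = 0" by (simp add: ev_def)

lemma ev_sum: "ev x (sum f A) = (\<Sum>a\<in>A. ev x (f a))"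
  by (induction A rule: infinite_finite_induct) auto

lemma ev_monom: "ev x (monom m c) = c * mon x m"
proof (cases "c = 0")
  case True then show ?thesis by simp
next
  case False
  have "ev x (monom m c) = (\<Sum>m'\<in>{m}. Poly_Mapping.lookup (monom m c) m' * mon x m')"
    by (rule ev_superset) (auto simp: monom_def)
  then show ?thesis by (simp add: monom_def)
qed

lemma ev_mult[simp]: "ev x (p * q) = ev x p * ev x q"
proof -
  let ?P = "Poly_Mapping.keys p" and ?Q = "Poly_Mapping.keys q"
  let ?mp = "\<lambda>m. monom m (Poly_Mapping.lookup p m)" and ?mq = "\<lambda>n. monom n (Poly_Mapping.lookup q n)"
  have pq: "p * q = (\<Sum>m\<in>?P. \<Sum>n\<in>?Q. ?mp m * ?mq n)"
    by (subst expand[of p], subst expand[of q]) (simp add: sum_product)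
  have "ev x (p*q) = (\<Sum>m\<in>?P. \<Sum>n\<in>?Q. ev x (?mp m) * ev x (?mq n))"
    unfolding pq by (simp add: ev_sum monom_mult ev_monom mon_add algebra_simps)
  also have "\<dots> = (\<Sum>m\<in>?P. ev x (?mp m)) * (\<Sum>n\<in>?Q. ev x (?mq n))"
    by (simp add: sum_product)
  also have "\<dots> = ev x p * ev x q"
    by (simp add: ev_sum[symmetric] expand[symmetric])
  finally show ?thesis .
qed

lemma ev_const[simp]: "ev x (const c) = c"
  by (simp add: const_def ev_monom mon_def)
lemma ev_1[simp]: "ev x 1 = 1" using ev_const[of x 1] by simp
lemma ev_numeral[simp]: "ev x (numeral k) = numeral k" using ev_const[of x "numeral k"] by simp
lemma ev_uminus[simp]: "ev x (- p) = - ev x p"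
  using ev_add[of x "-p" p] by (simp add: eq_neg_iff_add_eq_0)
lemma ev_diff[simp]: "ev x (p - q) = ev x p - ev x q"
  using ev_add[of x p "-q"] by simp
lemma ev_power[simp]: "ev x (p ^ n) = ev x p ^ n"
  by (induction n) auto
lemma ev_fv[simp]: "ev x (fv i l) = x (i, l)"
  by (simp add: fv_def ev_monom mon_def)

definition pt :: "nat \<times> nat \<Rightarrow> complex" where
  "pt v = (if v = (1,1) \<or> v = (2,2) \<or> v = (2,5) then 1 else 0)"

lemma ev_X18': "ev pt X18' = -15"
  unfolding X18'_def rK_def Lam7_def M8_def Delta_def f1'_def f1''_def
  by (simp add: Dsimps pt_def)

lemma ev_X19': "ev pt X19' = -45"
  unfolding X19'_def rK_def M8_def Delta_def f1'_def f1''_def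
  by (simp add: Dsimps pt_def)

definition wt :: "((nat \<times> nat) \<Rightarrow> nat) \<Rightarrow> jmono \<Rightarrow> nat" where
  "wt c m = (\<Sum>v\<in>Poly_Mapping.keys m. Poly_Mapping.lookup m v * c v)"

lemma wt_add: "wt c (a + b) = wt c a + wt c b"
  unfolding wt_def by (rule setsum_keys_plus_distrib) (auto simp: algebra_simps)

lemma wt_0[simp]: "wt c 0 = 0" by (simp add: wt_def)

lemma wt_single[simp]: "wt c (Poly_Mapping.single v n) = n * c v"
  by (cases "n = 0") (simp_all add: wt_def)

lemma minus_single_split: "Poly_Mapping.lookup m v \<noteq> 0 \<Longrightarrow> m = (m - Poly_Mapping.single v (1::nat)) + Poly_Mapping.single v 1"
  by (rule poly_mapping_eqI) (auto simp: lookup_add lookup_minus lookup_single when_def)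

lemma wt_minus_single: "Poly_Mapping.lookup m v \<noteq> 0 \<Longrightarrow> wt c (m - Poly_Mapping.single v 1) + c v = wt c m"
  by (subst (2) minus_single_split[of m v]) (simp_all add: wt_add)

definition c1 :: "nat \<times> nat \<Rightarrow> nat" where "c1 v = (if fst v = 1 then 1 else 0)"
definition c2 :: "nat \<times> nat \<Rightarrow> nat" where "c2 v = (if fst v = 2 then 1 else 0)"

definition td :: "jmono \<Rightarrow> nat \<times> nat \<times> nat" where
  "td m = (wt c1 m, wt c2 m, wt snd m)"

fun tadd :: "nat \<times> nat \<times> nat \<Rightarrow> nat \<times> nat \<times> nat \<Rightarrow> nat \<times> nat \<times> nat" where
  "tadd (a1,a2,a3) (b1,b2,b3) = (a1+b1, a2+b2, a3+b3)"

lemma td_add: "td (a + b) = tadd (td a) (td b)"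
  by (simp add: td_def wt_add)

definition Hom :: "nat \<times> nat \<times> nat \<Rightarrow> jpoly \<Rightarrow> bool" where
  "Hom d p \<longleftrightarrow> (\<forall>m\<in>Poly_Mapping.keys p. td m = d)"

lemma Hom_0: "Hom d 0" by (simp add: Hom_def)

lemma Hom_add': "Hom a p \<Longrightarrow> Hom b q \<Longrightarrow> a = c \<Longrightarrow> b = c \<Longrightarrow> Hom c (p + q)"
  unfolding Hom_def by (auto dest: set_mp[OF keys_add])

lemma Hom_uminus': "Hom a p \<Longrightarrow> Hom a (- p)"
  unfolding Hom_def by (simp add: in_keys_iff)

lemma Hom_diff': "Hom a p \<Longrightarrow> Hom b q \<Longrightarrow> a = c \<Longrightarrow> b = c \<Longrightarrow> Hom c (p - q)"
  using Hom_add'[of a p b "-q" c] Hom_uminus'[of b q] by simp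

lemma Hom_mult': "Hom a p \<Longrightarrow> Hom b q \<Longrightarrow> c = tadd a b \<Longrightarrow> Hom c (p * q)"
  unfolding Hom_def using keys_mult[of p q] by (auto simp: td_add)

lemma Hom_pow2': "Hom a p \<Longrightarrow> c = tadd a a \<Longrightarrow> Hom c (p ^ 2)"
  unfolding power2_eq_square by (rule Hom_mult')

lemma Hom_monom: "Hom (td m) (monom m c)"
  unfolding Hom_def by (simp add: monom_def)

lemma td_0: "td 0 = (0,0,0)" by (simp add: td_def)

lemma Hom_const: "Hom (0,0,0) (const c)"
  using Hom_monom[of 0 c] by (simp add: const_def td_0)

lemma Hom_numeral: "Hom (0,0,0) (numeral k)"
  using Hom_const[of "numeral k"] by simp

lemma Hom_fv1: "Hom (1,0,l) (fv 1 l)"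
  using Hom_monom[of "Poly_Mapping.single (1,l) 1" 1] by (simp add: fv_def td_def c1_def c2_def)
lemma Hom_fv2: "Hom (0,1,l) (fv 2 l)"
  using Hom_monom[of "Poly_Mapping.single (2,l) 1" 1] by (simp add: fv_def td_def c1_def c2_def)

lemma Hom_sum: "(\<And>a. a \<in> A \<Longrightarrow> Hom d (f a)) \<Longrightarrow> Hom d (sum f A)"
  by (induction A rule: infinite_finite_induct) (auto simp: Hom_0 intro: Hom_add')

fun tD :: "nat \<times> nat \<times> nat \<Rightarrow> nat \<times> nat \<times> nat" where
  "tD (a1,a2,a3) = (a1, a2, a3 + 1)"

lemma Hom_D: assumes "Hom d p" shows "Hom (tD d) (D p)"
proof -
  obtain a1 a2 a3 where d: "d = (a1,a2,a3)" by (cases d) auto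
  show ?thesis
    unfolding D_def
  proof (rule Hom_sum)
    fix m assume m: "m \<in> Poly_Mapping.keys p"
    with assms have tdm: "td m = d" by (simp add: Hom_def)
    have "Hom (tD d) (Dmon m)"
      unfolding Dmon_def
    proof (rule Hom_sum)
      fix v assume v: "v \<in> Poly_Mapping.keys m"
      obtain i l where vil: "v = (i,l)" by (cases v) auto
      let ?v = "(i,l)"
      have nz: "Poly_Mapping.lookup m ?v \<noteq> 0" using v vil by (simp add: in_keys_iff)
      have h1: "Hom (td (m - Poly_Mapping.single ?v 1)) (monom (m - Poly_Mapping.single ?v 1) 1)" by (rule Hom_monom)
      have h2: "Hom (td (Poly_Mapping.single (i, l+1) 1)) (fv i (l+1))"
        unfolding fv_def by (rule Hom_monom)
      have eq: "tD d = tadd (tadd (0,0,0) (td (m - Poly_Mapping.single ?v 1))) (td (Poly_Mapping.single (i, l+1) 1))"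
        using wt_minus_single[OF nz, of c1] wt_minus_single[OF nz, of c2] wt_minus_single[OF nz, of snd] tdm
        by (simp add: d td_def c1_def c2_def)
      have "Hom (tD d) (const (of_nat (Poly_Mapping.lookup m ?v)) * monom (m - Poly_Mapping.single ?v 1) 1 * fv i (l + 1))"
        by (rule Hom_mult'[OF Hom_mult'[OF Hom_const h1 refl] h2 eq])
      then show "Hom (tD d) (const (of_nat (Poly_Mapping.lookup m v)) * monom (m - Poly_Mapping.single v 1) 1 * fv (fst v) (snd v + 1))"
        by (simp add: vil)
    qed
    then show "Hom (tD d) (const (Poly_Mapping.lookup p m) * Dmon m)"
      by (rule Hom_mult'[OF Hom_const]) (cases "tD d", simp)
  qed
qed

lemma Hom_D': "Hom a p \<Longrightarrow> c = tD a \<Longrightarrow> Hom c (D p)"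
  using Hom_D by simp

lemma Hom_br: "Hom (a1,a2,m) P \<Longrightarrow> Hom (b1,b2,n) Q \<Longrightarrow> Hom (a1+b1,a2+b2,m+n+1) (br m P n Q)"
  unfolding br_def
  by (rule Hom_diff'[OF Hom_mult'[OF Hom_mult'[OF Hom_const Hom_D' refl] _ refl] Hom_mult'[OF Hom_mult'[OF Hom_const _ refl] Hom_D' refl]], assumption+) (auto)

lemma lookup_f1'_mult: "Poly_Mapping.lookup (f1' * q) (Poly_Mapping.single (1,1) 1 + m) = Poly_Mapping.lookup q m"
proof -
  let ?s = "Poly_Mapping.single (1::nat,1::nat) (1::nat)"
  have "f1' * q = (\<Sum>n\<in>Poly_Mapping.keys q. monom (?s + n) (Poly_Mapping.lookup q n))"
    by (subst expand[of q]) (simp add: sum_distrib_left f1'_def fv_def monom_mult)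
  then have "Poly_Mapping.lookup (f1' * q) (?s + m) = (\<Sum>n\<in>Poly_Mapping.keys q. (Poly_Mapping.lookup q n when n = m))"
    by (simp add: lookup_sum monom_def lookup_single when_def eq_commute)
  also have "\<dots> = Poly_Mapping.lookup q m"
    by (simp add: when_def in_keys_iff)
  finally show ?thesis .
qed

lemma Hom_shift: assumes "Hom (a,b,w) (f1' * q)" shows "Hom (a-1,b,w-1) q"
  unfolding Hom_def
proof
  fix m assume "m \<in> Poly_Mapping.keys q"
  then have "Poly_Mapping.single (1,1) 1 + m \<in> Poly_Mapping.keys (f1' * q)"
    by (simp only: in_keys_iff lookup_f1'_mult) simp
  with assms have "td (Poly_Mapping.single (1,1) 1 + m) = (a,b,w)" by (simp add: Hom_def)
  then show "td m = (a-1,b,w-1)"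
  proof -
    have ts: "td (Poly_Mapping.single (1,1) 1) = (1,0,1)" by (simp add: td_def c1_def c2_def)
    show ?thesis using \<open>td (Poly_Mapping.single (1,1) 1 + m) = (a,b,w)\<close>
      unfolding td_add ts by (cases "td m") auto
  qed
qed

lemmas Hom_intros = Hom_add' Hom_diff' Hom_uminus' Hom_mult' Hom_pow2' Hom_const Hom_numeral Hom_fv1 Hom_fv2 Hom_D'

lemma HomC_add: "Hom a p \<Longrightarrow> Hom b q \<Longrightarrow> a = b \<Longrightarrow> Hom a (p + q)"
  using Hom_add' by blast
lemma HomC_diff: "Hom a p \<Longrightarrow> Hom b q \<Longrightarrow> a = b \<Longrightarrow> Hom a (p - q)"
  using Hom_diff' by blast
lemma HomC_mult: "Hom a p \<Longrightarrow> Hom b q \<Longrightarrow> Hom (tadd a b) (p * q)"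
  using Hom_mult' by blast
lemma HomC_pow2: "Hom a p \<Longrightarrow> Hom (tadd a a) (p ^ 2)"
  using Hom_pow2' by blast
lemma Hom_conv: "Hom d p \<Longrightarrow> d = c \<Longrightarrow> Hom c p" by simp
lemmas HomC = HomC_add HomC_diff HomC_mult HomC_pow2 Hom_uminus' Hom_const Hom_numeral Hom_fv1 Hom_fv2

lemma Hom_Delta: "Hom (1,1,a+b) (Delta a b)"
  unfolding Delta_def by (rule Hom_conv, (rule HomC | simp add: add.commute)+)

lemma Hom_f1': "Hom (1,0,1) f1'" unfolding f1'_def by (rule Hom_fv1)
lemma Hom_f1'': "Hom (1,0,2) f1''" unfolding f1''_def by (rule Hom_fv1)

lemmas Hom_atoms = Hom_Delta Hom_f1' Hom_f1''

lemma Hom_Lam3: "Hom (1,1,3) Lam3" unfolding Lam3_def using Hom_Delta[of 1 2] by (simp add: numeral_eq_Suc)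
lemma Hom_Lam5: "Hom (2,1,5) Lam5" unfolding Lam5_def by (rule Hom_conv, (rule HomC Hom_atoms | simp add: numeral_eq_Suc)+)
lemma Hom_Lam7: "Hom (3,1,7) Lam7" unfolding Lam7_def by (rule Hom_conv, (rule HomC Hom_atoms | simp add: numeral_eq_Suc)+)
lemma Hom_M8: "Hom (2,2,8) M8" unfolding M8_def by (rule Hom_conv, (rule HomC Hom_atoms | simp add: numeral_eq_Suc)+)
lemma Hom_Lam9: "Hom (4,1,9) Lam9" unfolding Lam9_def using Hom_br[OF Hom_Lam7 Hom_f1'] by simp
lemma Hom_M10: "Hom (3,2,10) M10" unfolding M10_def using Hom_br[OF Hom_M8 Hom_f1'] by simp
lemma Hom_N12: "Hom (3,3,12) N12" unfolding N12_def using Hom_br[OF Hom_M8 Hom_Lam3] by simp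
lemma Hom_H14: "Hom (4,3,14) H14" unfolding H14_def using Hom_br[OF Hom_M8 Hom_Lam5] by simp
lemma Hom_F16: "Hom (5,3,16) F16" unfolding F16_def using Hom_br[OF Hom_M8 Hom_Lam7] by simp
lemma Hom_K12: "Hom (4,2,12) K12"
proof -
  have "Hom (3+2,1+1,7+5+1) (br 7 Lam7 5 Lam5)" by (rule Hom_br[OF Hom_Lam7 Hom_Lam5])
  then have "Hom (3+2,1+1,7+5+1) (f1' * K12)" by (simp only: B_id K12_eq)
  from Hom_shift[OF this] show ?thesis by (rule Hom_conv) simp
qed
lemma Hom_A18: "Hom (7,3,19) A18"
  unfolding A18_def by (rule Hom_conv, (rule HomC Hom_Lam9 Hom_M10 Hom_Lam7 Hom_K12 | simp add: numeral_eq_Suc)+)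
lemma Hom_A19: "Hom (6,4,20) A19"
  unfolding A19_def by (rule Hom_conv, (rule HomC Hom_M10 Hom_M8 Hom_K12 | simp add: numeral_eq_Suc)+)
lemma Hom_X18: "Hom (6,3,18) X18"
  using Hom_shift[of 7 3 19 X18'] Hom_A18 by (simp add: A18_id X18_eq)
lemma Hom_X19: "Hom (5,4,19) X19"
  using Hom_shift[of 6 4 20 X19'] Hom_A19 by (simp add: A19_id X19_eq)

lemma X18_ne: "X18 \<noteq> 0" using ev_X18' by (auto simp: X18_eq)
lemma X19_ne: "X19 \<noteq> 0" using ev_X19' by (auto simp: X19_eq)

lemma inv:
  assumes "p \<in> polys_in G"
    and "\<And>g m. g \<in> G \<Longrightarrow> m \<in> Poly_Mapping.keys g \<Longrightarrow> P (td m)"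
    and "P (0,0,0)" and "\<And>x y. P x \<Longrightarrow> P y \<Longrightarrow> P (tadd x y)"
  shows "\<forall>m\<in>Poly_Mapping.keys p. P (td m)"
  using assms(1)
proof induction
  case (const c) then show ?case using assms(3) by (simp add: const_def monom_def td_0)
next
  case (gen g) then show ?case using assms(2) by blast
next
  case (add p q) then show ?case by (auto dest: set_mp[OF keys_add])
next
  case (mult p q)
  show ?case
  proof
    fix m assume "m \<in> Poly_Mapping.keys (p * q)"
    then obtain a b where "a \<in> Poly_Mapping.keys p" "b \<in> Poly_Mapping.keys q" "m = a + b"
      using keys_mult[of p q] by blast
    then show "P (td m)" using mult.IH assms(4) by (simp add: td_add)
  qed
qed

lemma not_in:
  assumes "Hom d x" "x \<noteq> 0" "\<not> P d"
    and "\<And>g. g \<in> G \<Longrightarrow> \<exists>e. Hom e g \<and> P e"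
    and "P (0,0,0)" and "\<And>x y. P x \<Longrightarrow> P y \<Longrightarrow> P (tadd x y)"
  shows "x \<notin> polys_in G"
proof
  assume "x \<in> polys_in G"
  have "\<forall>m\<in>Poly_Mapping.keys x. P (td m)"
  proof (rule inv[OF \<open>x \<in> polys_in G\<close> _ assms(5,6)])
    fix g m assume "g \<in> G" "m \<in> Poly_Mapping.keys g"
    then show "P (td m)" using assms(4)[of g] by (auto simp: Hom_def)
  qed
  moreover obtain m where "m \<in> Poly_Mapping.keys x"
    using assms(2) by (metis ex_in_conv in_keys_iff poly_mapping_eqI lookup_zero)
  ultimately show False using assms(1,3) by (auto simp: Hom_def)
qed

fun P18 :: "nat \<times> nat \<times> nat \<Rightarrow> bool" where
  "P18 (d1,d2,w) = (w < 2*(d1+d2) \<or> (w = 2*(d1+d2) \<and> (d1 < 2*d2 \<or> (d1 = 2*d2 \<and> even d2))))"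

fun P19 :: "nat \<times> nat \<times> nat \<Rightarrow> bool" where
  "P19 (d1,d2,w) = (w \<le> 2*(d1+d2))"

lemma P18_add: "P18 x \<Longrightarrow> P18 y \<Longrightarrow> P18 (tadd x y)"
  by (cases x; cases y) auto
lemma P19_add: "P19 x \<Longrightarrow> P19 y \<Longrightarrow> P19 (tadd x y)"
  by (cases x; cases y) auto

theorem mainTheorem13:
  shows "f1' dvd A18 \<and> f1' dvd A19 \<and> A18 = f1' * X18 \<and> A19 = f1' * X19
     \<and> X18 \<notin> polys_in eleven \<and> X19 \<notin> polys_in (insert X18 eleven)"
proof (intro conjI)
  show "A18 = f1' * X18" by (simp add: A18_id X18_eq)
  show "A19 = f1' * X19" by (simp add: A19_id X19_eq)
  then show "f1' dvd A19" by (rule dvdI)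
  show "f1' dvd A18" using \<open>A18 = f1' * X18\<close> by (rule dvdI)
  show "X18 \<notin> polys_in eleven"
  proof (rule not_in[OF Hom_X18 X18_ne, of P18])
    fix g assume "g \<in> eleven"
    show "\<exists>e. Hom e g \<and> P18 e"
    proof -
      have h0: "Hom (1,0,1) f1' \<and> P18 (1,0,1)" using Hom_f1' by simp
      have h1: "Hom (1,1,3) Lam3 \<and> P18 (1,1,3)" using Hom_Lam3 by simp
      have h2: "Hom (2,1,5) Lam5 \<and> P18 (2,1,5)" using Hom_Lam5 by simp
      have h3: "Hom (3,1,7) Lam7 \<and> P18 (3,1,7)" using Hom_Lam7 by simp
      have h4: "Hom (2,2,8) M8 \<and> P18 (2,2,8)" using Hom_M8 by simp
      have h5: "Hom (4,1,9) Lam9 \<and> P18 (4,1,9)" using Hom_Lam9 by simp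
      have h6: "Hom (3,2,10) M10 \<and> P18 (3,2,10)" using Hom_M10 by simp
      have h7: "Hom (3,3,12) N12 \<and> P18 (3,3,12)" using Hom_N12 by simp
      have h8: "Hom (4,2,12) K12 \<and> P18 (4,2,12)" using Hom_K12 by simp
      have h9: "Hom (4,3,14) H14 \<and> P18 (4,3,14)" using Hom_H14 by simp
      have h10: "Hom (5,3,16) F16 \<and> P18 (5,3,16)" using Hom_F16 by simp
      show ?thesis using h0 h1 h2 h3 h4 h5 h6 h7 h8 h9 h10 \<open>g \<in> _\<close> unfolding eleven_def by blast
    qed
  qed (auto intro: P18_add)
  show "X19 \<notin> polys_in (insert X18 eleven)"
  proof (rule not_in[OF Hom_X19 X19_ne, of P19])
    fix g assume "g \<in> insert X18 eleven"
    show "\<exists>e. Hom e g \<and> P19 e"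
    proof -
      have h0: "Hom (1,0,1) f1' \<and> P19 (1,0,1)" using Hom_f1' by simp
      have h1: "Hom (1,1,3) Lam3 \<and> P19 (1,1,3)" using Hom_Lam3 by simp
      have h2: "Hom (2,1,5) Lam5 \<and> P19 (2,1,5)" using Hom_Lam5 by simp
      have h3: "Hom (3,1,7) Lam7 \<and> P19 (3,1,7)" using Hom_Lam7 by simp
      have h4: "Hom (2,2,8) M8 \<and> P19 (2,2,8)" using Hom_M8 by simp
      have h5: "Hom (4,1,9) Lam9 \<and> P19 (4,1,9)" using Hom_Lam9 by simp
      have h6: "Hom (3,2,10) M10 \<and> P19 (3,2,10)" using Hom_M10 by simp
      have h7: "Hom (3,3,12) N12 \<and> P19 (3,3,12)" using Hom_N12 by simp
      have h8: "Hom (4,2,12) K12 \<and> P19 (4,2,12)" using Hom_K12 by simp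
      have h9: "Hom (4,3,14) H14 \<and> P19 (4,3,14)" using Hom_H14 by simp
      have h10: "Hom (5,3,16) F16 \<and> P19 (5,3,16)" using Hom_F16 by simp
      have h11: "Hom (6,3,18) X18 \<and> P19 (6,3,18)" using Hom_X18 by simp
      show ?thesis using h0 h1 h2 h3 h4 h5 h6 h7 h8 h9 h10 h11 \<open>g \<in> _\<close> unfolding eleven_def by blast
    qed
  qed (auto intro: P19_add)
qed

end
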